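(* Let $f,g$ satisfy (H1) (see context). For $\theta,H\in\Theta$ and $\gamma>0$ set $S_\gamma(\theta)=\mathrm{Prox}_\gamma(\theta-\gamma H)$ and $\eta=H-\nabla f(\theta)$. Then for any $\theta,H\in\Theta$ and $\gamma>0$, $\|T_\gamma(\theta)-S_\gamma(\theta)\|\le\gamma\|\eta\|$. Moreover, for any $\theta,H\in\Theta$ and $\gamma\in(0,1/L]$, $$|F(S_\gamma(\theta))-F(T_\gamma(\theta))|\le(1+c\gamma L)\|\eta\|\big(\gamma\|\eta\|+(1+c\gamma L)\|\theta-T_\gamma(\theta)\|\big),$$ where $c=0$ if $f$ is convex and $c=1$ otherwise.
   Context: $\Theta$ is a finite-dimensional Euclidean space with norm $\|\cdot\|$. (H1): $g:\Theta\to(-\infty,+\infty]$ convex, not identically $+\infty$, lower semicontinuous; $f:\Theta\to\mathbb R$ continuously differentiable with $L$-Lipschitz gradient. $F=f+g$; $\mathrm{Prox}_\gamma(\theta)=\mathrm{argmin}_{\vartheta}\{g(\vartheta)+\frac1{2\gamma}\|\vartheta-\theta\|^2\}$; $T_\gamma(\theta)=\mathrm{Prox}_\gamma(\theta-\gamma\nabla f(\theta))$. *)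

theory Defs
  imports "HOL-Analysis.Analysis"
begin

definition ereal_convex :: "('a::real_vector \<Rightarrow> ereal) \<Rightarrow> bool" where
  "ereal_convex g \<longleftrightarrow>
     (\<forall>x y. \<forall>t::real. 0 \<le> t \<and> t \<le> 1 \<longrightarrow>
        g ((1 - t) *\<^sub>R x + t *\<^sub>R y) \<le> ereal (1 - t) * g x + ereal t * g y)"

definition ereal_lsc :: "('a::topological_space \<Rightarrow> ereal) \<Rightarrow> bool" where
  "ereal_lsc g \<longleftrightarrow> (\<forall>c::real. closed {x. g x \<le> ereal c})"

definition H1_g :: "('a::euclidean_space \<Rightarrow> ereal) \<Rightarrow> bool" where
  "H1_g g \<longleftrightarrow> ereal_convex g \<and> (\<forall>x. g x \<noteq> -\<infinity>) \<and> (\<exists>x. g x \<noteq> \<infinity>) \<and> ereal_lsc g"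

text \<open>Proximal operator: the (unique, under H1) minimiser of g v + |v - theta|^2/(2 gamma).\<close>
definition Prox :: "('a::euclidean_space \<Rightarrow> ereal) \<Rightarrow> real \<Rightarrow> 'a \<Rightarrow> 'a" where
  "Prox g \<gamma> \<theta> = (THE v. \<forall>w. g v + ereal ((norm (v - \<theta>))\<^sup>2 / (2 * \<gamma>))
                              \<le> g w + ereal ((norm (w - \<theta>))\<^sup>2 / (2 * \<gamma>)))"

definition T_op :: "('a::euclidean_space \<Rightarrow> ereal) \<Rightarrow> ('a \<Rightarrow> 'a) \<Rightarrow> real \<Rightarrow> 'a \<Rightarrow> 'a" where
  "T_op g grad_f \<gamma> \<theta> = Prox g \<gamma> (\<theta> - \<gamma> *\<^sub>R grad_f \<theta>)"

end

theory Submission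
  imports Defs
begin


lemma line_deriv:
  assumes hgrad: "\<And>x. (f has_derivative (\<lambda>h. grad_f x \<bullet> h)) (at x)"
  shows "((\<lambda>t. f (x + t *\<^sub>R d)) has_real_derivative (grad_f (x + t *\<^sub>R d) \<bullet> d)) (at t)"
proof -
  have "((\<lambda>t. x + t *\<^sub>R d) has_derivative (\<lambda>s. s *\<^sub>R d)) (at t)"
    by (auto intro!: derivative_eq_intros)
  from has_derivative_compose[OF this hgrad]
  have "((\<lambda>t. f (x + t *\<^sub>R d)) has_derivative (\<lambda>s. grad_f (x + t *\<^sub>R d) \<bullet> (s *\<^sub>R d))) (at t)" .
  moreover have eq: "(\<lambda>s. grad_f (x + t *\<^sub>R d) \<bullet> (s *\<^sub>R d)) = (*) (grad_f (x + t *\<^sub>R d) \<bullet> d)"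
    by (auto simp: fun_eq_iff)
  ultimately show ?thesis unfolding has_field_derivative_def by metis
qed

lemma descent_upper:
  fixes f :: "'a::euclidean_space \<Rightarrow> real"
  assumes hgrad: "\<And>x. (f has_derivative (\<lambda>h. grad_f x \<bullet> h)) (at x)"
    and hLip: "\<And>x y. norm (grad_f x - grad_f y) \<le> L * norm (x - y)"
  shows "f y \<le> f x + grad_f x \<bullet> (y - x) + L / 2 * (norm (y - x))\<^sup>2"
proof -
  define d where "d = y - x"
  define \<psi> where "\<psi> t = f (x + t *\<^sub>R d) - t * (grad_f x \<bullet> d) - L/2 * t^2 * (norm d)^2" for t
  have "\<psi> 0 \<ge> \<psi> 1"
  proof (rule DERIV_nonpos_imp_nonincreasing[of 0 1])
    fix t :: real assume t: "0 \<le> t" "t \<le> 1"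
    have D: "(\<psi> has_real_derivative (grad_f (x + t *\<^sub>R d) \<bullet> d - grad_f x \<bullet> d - L * t * (norm d)^2)) (at t)"
      unfolding \<psi>_def
      by (auto intro!: derivative_eq_intros line_deriv[OF hgrad] simp: power2_eq_square)
    have "(grad_f (x + t *\<^sub>R d) - grad_f x) \<bullet> d \<le> norm (grad_f (x + t *\<^sub>R d) - grad_f x) * norm d"
      by (rule norm_cauchy_schwarz)
    also have "\<dots> \<le> L * norm (t *\<^sub>R d) * norm d"
      using hLip[of "x + t *\<^sub>R d" x] by (simp add: mult_right_mono)
    also have "\<dots> = L * t * (norm d)^2" using t by (simp add: power2_eq_square)
    finally have "grad_f (x + t *\<^sub>R d) \<bullet> d - grad_f x \<bullet> d - L * t * (norm d)^2 \<le> 0"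
      by (simp add: inner_diff_left)
    with D show "\<exists>y. (\<psi> has_real_derivative y) (at t) \<and> y \<le> 0" by blast
  qed simp
  then show ?thesis unfolding \<psi>_def d_def by (simp add: inner_commute)
qed

lemma descent_lower:
  fixes f :: "'a::euclidean_space \<Rightarrow> real"
  assumes hgrad: "\<And>x. (f has_derivative (\<lambda>h. grad_f x \<bullet> h)) (at x)"
    and hLip: "\<And>x y. norm (grad_f x - grad_f y) \<le> L * norm (x - y)"
  shows "f y \<ge> f x + grad_f x \<bullet> (y - x) - L / 2 * (norm (y - x))\<^sup>2"
proof -
  have h2: "((\<lambda>x. - f x) has_derivative (\<lambda>h. (- grad_f x) \<bullet> h)) (at x)" for x
    using has_derivative_minus[OF hgrad[of x]] by (simp add: inner_minus_left)
  have l2: "norm ((- grad_f x) - (- grad_f y)) \<le> L * norm (x - y)" for x y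
  proof -
    have "norm ((- grad_f x) - (- grad_f y)) = norm (grad_f x - grad_f y)"
      by (simp add: norm_minus_commute)
    then show ?thesis using hLip[of x y] by simp
  qed
  have "- f y \<le> - f x + (- grad_f x) \<bullet> (y - x) + L / 2 * (norm (y - x))\<^sup>2"
    by (rule descent_upper[of "\<lambda>x. - f x" "\<lambda>x. - grad_f x", OF h2 l2])
  then show ?thesis by (simp add: inner_minus_left)
qed

lemma convex_grad:
  fixes f :: "'a::euclidean_space \<Rightarrow> real"
  assumes hgrad: "\<And>x. (f has_derivative (\<lambda>h. grad_f x \<bullet> h)) (at x)"
    and cv: "convex_on UNIV f"
  shows "f y \<ge> f x + grad_f x \<bullet> (y - x)"
proof -
  define d where "d = y - x"
  define \<phi> where "\<phi> t = f (x + t *\<^sub>R d)" for t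
  have c: "convex_on UNIV \<phi>"
  proof (rule convex_onI)
    fix t u v :: real assume "0 < t" "t < 1"
    have "x + ((1 - t) * u + t * v) *\<^sub>R d = (1 - t) *\<^sub>R (x + u *\<^sub>R d) + t *\<^sub>R (x + v *\<^sub>R d)"
      by (simp add: algebra_simps)
    then show "\<phi> ((1 - t) *\<^sub>R u + t *\<^sub>R v) \<le> (1 - t) * \<phi> u + t * \<phi> v"
      unfolding \<phi>_def using convex_onD[OF cv, of t "x + u *\<^sub>R d" "x + v *\<^sub>R d"] \<open>0<t\<close> \<open>t<1\<close> by simp
  qed simp
  have D: "(\<phi> has_field_derivative (grad_f x \<bullet> d)) (at 0 within UNIV)"
    unfolding \<phi>_def using line_deriv[OF hgrad, of x d 0] by simp
  have "\<phi> 1 - \<phi> 0 \<ge> (grad_f x \<bullet> d) * (1 - 0)"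
    by (rule convex_on_imp_above_tangent[OF c]) (use D in auto)
  then show ?thesis unfolding \<phi>_def d_def by simp
qed

lemma cocoercive_aux:
  fixes f :: "'a::euclidean_space \<Rightarrow> real"
  assumes hgrad: "\<And>x. (f has_derivative (\<lambda>h. grad_f x \<bullet> h)) (at x)"
    and hLip: "\<And>x y. norm (grad_f x - grad_f y) \<le> L * norm (x - y)"
    and cv: "convex_on UNIV f" and hL: "L > 0"
  shows "f y \<ge> f x + grad_f x \<bullet> (y - x) + (norm (grad_f y - grad_f x))\<^sup>2 / (2 * L)"
proof -
  define a where "a = grad_f x"
  define b where "b = grad_f y"
  define v where "v = b - a"
  define w where "w = y - (1 / L) *\<^sub>R v"
  have 1: "f w \<ge> f x + a \<bullet> (w - x)" unfolding a_def by (rule convex_grad[OF hgrad cv])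
  have 2: "f w \<le> f y + b \<bullet> (w - y) + L / 2 * (norm (w - y))\<^sup>2"
    unfolding b_def by (rule descent_upper[OF hgrad hLip])
  have e1: "a \<bullet> (w - x) = a \<bullet> (y - x) - (1/L) * (a \<bullet> v)"
    unfolding w_def by (simp add: inner_diff_right algebra_simps)
  have e2: "b \<bullet> (w - y) = - (1/L) * (b \<bullet> v)"
    unfolding w_def by (simp add: inner_diff_right algebra_simps)
  have e3: "(norm (w - y))\<^sup>2 = (norm v)\<^sup>2 / L^2"
    unfolding w_def using hL by (simp add: power_divide power_mult_distrib)
  have e4: "b \<bullet> v - a \<bullet> v = (norm v)\<^sup>2"
    unfolding v_def by (simp add: power2_norm_eq_inner inner_diff_left inner_diff_right)
  have "f y \<ge> f x + a \<bullet> (y - x) + (1/L) * (b \<bullet> v - a \<bullet> v) - L / 2 * ((norm v)\<^sup>2 / L^2)"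
    using 1 2 e1 e2 e3 by (simp add: algebra_simps)
  moreover have "(1/L) * (b \<bullet> v - a \<bullet> v) - L / 2 * ((norm v)\<^sup>2 / L^2) = (norm v)\<^sup>2 / (2 * L)"
    using hL unfolding e4 by (simp add: field_simps power2_eq_square)
  ultimately show ?thesis unfolding a_def b_def v_def by linarith
qed

lemma cocoercive:
  fixes f :: "'a::euclidean_space \<Rightarrow> real"
  assumes hgrad: "\<And>x. (f has_derivative (\<lambda>h. grad_f x \<bullet> h)) (at x)"
    and hLip: "\<And>x y. norm (grad_f x - grad_f y) \<le> L * norm (x - y)"
    and cv: "convex_on UNIV f" and hL: "L > 0"
  shows "(grad_f x - grad_f y) \<bullet> (x - y) \<ge> (norm (grad_f x - grad_f y))\<^sup>2 / L"
proof -
  have 1: "f y \<ge> f x + grad_f x \<bullet> (y - x) + (norm (grad_f y - grad_f x))\<^sup>2 / (2 * L)"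
    by (rule cocoercive_aux[OF hgrad hLip cv hL])
  have 2: "f x \<ge> f y + grad_f y \<bullet> (x - y) + (norm (grad_f x - grad_f y))\<^sup>2 / (2 * L)"
    by (rule cocoercive_aux[OF hgrad hLip cv hL])
  have n: "norm (grad_f y - grad_f x) = norm (grad_f x - grad_f y)" by (rule norm_minus_commute)
  have i: "(grad_f x - grad_f y) \<bullet> (x - y) = - (grad_f x \<bullet> (y - x)) - grad_f y \<bullet> (x - y)"
    by (simp add: inner_diff_left inner_diff_right)
  show ?thesis using 1 2 unfolding n i by (simp add: field_simps)
qed

lemma grad_step_nonexp:
  fixes f :: "'a::euclidean_space \<Rightarrow> real"
  assumes hgrad: "\<And>x. (f has_derivative (\<lambda>h. grad_f x \<bullet> h)) (at x)"
    and hLip: "\<And>x y. norm (grad_f x - grad_f y) \<le> L * norm (x - y)"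
    and cv: "convex_on UNIV f" and hL: "L > 0" and g0: "0 < \<gamma>" and g1: "\<gamma> \<le> 1 / L"
  shows "norm ((x - y) - \<gamma> *\<^sub>R (grad_f x - grad_f y)) \<le> norm (x - y)"
proof -
  define u where "u = x - y"
  define v where "v = grad_f x - grad_f y"
  have c: "u \<bullet> v \<ge> (norm v)\<^sup>2 / L"
    unfolding u_def v_def using cocoercive[OF hgrad hLip cv hL, of x y] by (simp add: inner_commute)
  have "(norm (u - \<gamma> *\<^sub>R v))\<^sup>2 = (norm u)\<^sup>2 - 2 * \<gamma> * (u \<bullet> v) + \<gamma>^2 * (norm v)\<^sup>2"
    unfolding power2_norm_eq_inner by (simp add: inner_diff_left inner_diff_right inner_commute power2_eq_square algebra_simps)
  also have "\<dots> \<le> (norm u)\<^sup>2 - 2 * \<gamma> * ((norm v)\<^sup>2 / L) + \<gamma>^2 * (norm v)\<^sup>2"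
    using mult_left_mono[OF c, of "2 * \<gamma>"] g0 by simp
  also have "\<dots> \<le> (norm u)\<^sup>2"
  proof -
    have "\<gamma> * L \<le> 1" using g1 hL by (simp add: field_simps)
    then have "\<gamma>^2 \<le> 2 * \<gamma> / L" using g0 hL by (simp add: field_simps power2_eq_square)
    from mult_right_mono[OF this, of "(norm v)\<^sup>2"]
    have "\<gamma>^2 * (norm v)\<^sup>2 \<le> 2 * \<gamma> / L * (norm v)\<^sup>2" by simp
    then show ?thesis by simp
  qed
  finally show ?thesis unfolding u_def[symmetric] v_def[symmetric]
    by (rule power2_le_imp_le) simp
qed



lemma ereal_add_real_le: "a + ereal b \<le> ereal c \<Longrightarrow> a \<le> ereal (c - b)"
  by (cases a) auto

lemma lsc_plus_cont_closed:
  fixes g :: "'a::euclidean_space \<Rightarrow> ereal"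
  assumes lsc: "ereal_lsc g" and q: "continuous_on UNIV q"
  shows "closed {x. g x + ereal (q x) \<le> ereal c}"
  unfolding closed_sequential_limits
proof (intro allI impI, elim conjE)
  fix x :: "nat \<Rightarrow> 'a" and l
  assume xs: "\<forall>n. x n \<in> {x. g x + ereal (q x) \<le> ereal c}" and lim: "x \<longlonglongrightarrow> l"
  have ql: "(\<lambda>n. q (x n)) \<longlonglongrightarrow> q l"
  proof -
    have "isCont q l" using q by (simp add: continuous_on_eq_continuous_at)
    then show ?thesis by (rule isCont_tendsto_compose[OF _ lim])
  qed
  have main: "g l \<le> ereal (c - q l + e)" if e: "e > 0" for e
  proof -
    have ev: "eventually (\<lambda>n. q (x n) > q l - e) sequentially"
      using order_tendstoD(1)[OF ql, of "q l - e"] e by simp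
    have ev2: "eventually (\<lambda>n. x n \<in> {y. g y \<le> ereal (c - q l + e)}) sequentially"
    proof (rule eventually_mono[OF ev])
      fix n assume n: "q (x n) > q l - e"
      have "g (x n) \<le> ereal (c - q (x n))" using xs ereal_add_real_le by blast
      also have "\<dots> \<le> ereal (c - q l + e)" using n by simp
      finally show "x n \<in> {y. g y \<le> ereal (c - q l + e)}" by simp
    qed
    have cl: "closed {y. g y \<le> ereal (c - q l + e)}" using lsc unfolding ereal_lsc_def by blast
    have "l \<in> {y. g y \<le> ereal (c - q l + e)}"
      by (rule Lim_in_closed_set[OF cl ev2 trivial_limit_sequentially lim])
    then show ?thesis by simp
  qed
  show "l \<in> {x. g x + ereal (q x) \<le> ereal c}"
  proof (cases "g l")
    case (real r)
    have "r \<le> c - q l" by (rule field_le_epsilon) (use main real in auto)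
    then show ?thesis using real by simp
  next
    case PInf
    then show ?thesis using main[of 1] by simp
  next
    case MInf
    then show ?thesis by simp
  qed
qed

lemma lsc_min_compact:
  fixes h :: "'a::euclidean_space \<Rightarrow> ereal"
  assumes K: "compact K" "K \<noteq> {}" and cl: "\<And>c. closed {x. h x \<le> ereal c}"
  shows "\<exists>x\<in>K. \<forall>y\<in>K. h x \<le> h y"
proof -
  define m where "m = (INF y\<in>K. h y)"
  have "K \<inter> (\<Inter>c\<in>{c. m < ereal c}. {x. h x \<le> ereal c}) \<noteq> {}"
  proof (rule compact_imp_fip_image[OF K(1)])
    fix i show "closed {x. h x \<le> ereal i}" by (rule cl)
  next
    fix I' assume fin: "finite I'" and sub: "I' \<subseteq> {c. m < ereal c}"
    show "K \<inter> (\<Inter>c\<in>I'. {x. h x \<le> ereal c}) \<noteq> {}"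
    proof (cases "I' = {}")
      case True then show ?thesis using K by simp
    next
      case False
      define c0 where "c0 = Min I'"
      have "c0 \<in> I'" unfolding c0_def using fin False by simp
      then have "m < ereal c0" using sub by auto
      then obtain y where y: "y \<in> K" "h y < ereal c0" unfolding m_def by (auto simp: INF_less_iff)
      have "\<forall>c\<in>I'. c0 \<le> c" unfolding c0_def using fin by simp
      then have "y \<in> K \<inter> (\<Inter>c\<in>I'. {x. h x \<le> ereal c})" using y by (auto intro: order.trans[OF less_imp_le])
      then show ?thesis by blast
    qed
  qed
  then obtain x where x: "x \<in> K" "\<And>c. m < ereal c \<Longrightarrow> h x \<le> ereal c" by blast
  have "h x \<le> m"
  proof (rule ccontr)
    assume "\<not> h x \<le> m"
    then have "m < h x" by simp
    then obtain z where "m < ereal z" "ereal z < h x" using ereal_dense2 by blast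
    then show False using x(2) by fastforce
  qed
  moreover have "\<forall>y\<in>K. m \<le> h y" unfolding m_def by (auto intro: INF_lower)
  ultimately show ?thesis using x(1) by (meson order.trans)
qed

lemma g_lower_linear:
  fixes g :: "'a::euclidean_space \<Rightarrow> ereal"
  assumes hg: "H1_g g"
  shows "\<exists>x0 r0 m0. g x0 = ereal r0 \<and> m0 \<le> r0 \<and> (\<forall>v. ereal (m0 - (r0 - m0) * norm (v - x0)) \<le> g v)"
proof -
  have cv: "ereal_convex g" and nm: "\<And>x. g x \<noteq> -\<infinity>" and ex: "\<exists>x. g x \<noteq> \<infinity>" and lsc: "ereal_lsc g"
    using hg unfolding H1_g_def by auto
  obtain x0 where x0: "g x0 \<noteq> \<infinity>" using ex by blast
  then obtain r0 where r0: "g x0 = ereal r0" using nm[of x0] by (cases "g x0") auto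
  have cl: "closed {x. g x \<le> ereal c}" for c using lsc unfolding ereal_lsc_def by blast
  obtain u0 where u0: "u0 \<in> cball x0 1" "\<And>y. y \<in> cball x0 1 \<Longrightarrow> g u0 \<le> g y"
    using lsc_min_compact[of "cball x0 1" g, OF compact_cball _ cl] by force
  have "g u0 \<le> ereal r0" using u0(2)[of x0] r0 by simp
  then obtain m0 where m0: "g u0 = ereal m0" "m0 \<le> r0" using nm[of u0] by (cases "g u0") auto
  have low: "ereal m0 \<le> g y" if "y \<in> cball x0 1" for y using u0(2)[OF that] m0 by simp
  have "ereal (m0 - (r0 - m0) * norm (v - x0)) \<le> g v" for v
  proof (cases "norm (v - x0) \<le> 1")
    case True
    then have "v \<in> cball x0 1" by (simp add: dist_norm norm_minus_commute)
    then have "ereal m0 \<le> g v" by (rule low)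
    moreover have "m0 - (r0 - m0) * norm (v - x0) \<le> m0" using m0(2) by simp
    ultimately show ?thesis by (meson ereal_less_eq(3) order.trans)
  next
    case False
    define s where "s = norm (v - x0)"
    have s1: "s > 1" using False s_def by simp
    show ?thesis
    proof (cases "g v")
      case PInf then show ?thesis by simp
    next
      case MInf then show ?thesis using nm by simp
    next
      case (real b)
      define t where "t = 1 / s"
      have t: "0 \<le> t" "t \<le> 1" "t * s = 1" using s1 unfolding t_def by auto
      define u where "u = (1 - t) *\<^sub>R x0 + t *\<^sub>R v"
      have "u - x0 = t *\<^sub>R (v - x0)" unfolding u_def by (simp add: algebra_simps)
      then have "norm (u - x0) = 1" using t unfolding s_def by simp
      then have "u \<in> cball x0 1" by (simp add: dist_norm norm_minus_commute)
      then have "ereal m0 \<le> g u" by (rule low)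
      also have "g u \<le> ereal (1 - t) * g x0 + ereal t * g v"
        using cv t unfolding ereal_convex_def u_def by blast
      also have "\<dots> = ereal ((1 - t) * r0 + t * b)" using r0 real by simp
      finally have "m0 \<le> (1 - t) * r0 + t * b" by simp
      then have "m0 * s \<le> ((1 - t) * r0 + t * b) * s" using s1 by (simp add: mult_right_mono)
      also have "\<dots> = s * r0 - r0 + b" using t(3) by (simp add: algebra_simps)
      finally have "b \<ge> r0 - (r0 - m0) * s" by (simp add: algebra_simps)
      then have "b \<ge> m0 - (r0 - m0) * s" using m0(2) by linarith
      then show ?thesis using real s_def by simp
    qed
  qed
  then show ?thesis using r0 m0(2) by blast
qed

lemma quad_bound:
  fixes s a b :: real
  assumes "0 \<le> s" "0 \<le> a" "0 \<le> b" "s^2 \<le> a * s + b"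
  shows "s \<le> a + b + 1"
proof (cases "s \<le> 1")
  case True then show ?thesis using assms by linarith
next
  case False
  then have "b \<le> b * s" using assms by (simp add: mult_le_cancel_left1)
  then have "s * s \<le> (a + b) * s" using assms by (simp add: power2_eq_square algebra_simps)
  then have "s \<le> a + b" using False by simp
  then show ?thesis by simp
qed

lemma prox_exists:
  fixes g :: "'a::euclidean_space \<Rightarrow> ereal"
  assumes hg: "H1_g g" and gp: "\<gamma> > 0"
  shows "\<exists>v. \<forall>w. g v + ereal ((norm (v - z))\<^sup>2 / (2 * \<gamma>)) \<le> g w + ereal ((norm (w - z))\<^sup>2 / (2 * \<gamma>))"
proof -
  define q where "q v = (norm (v - z))\<^sup>2 / (2 * \<gamma>)" for v
  define h where "h v = g v + ereal (q v)" for v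
  obtain x0 r0 m0 where x0: "g x0 = ereal r0" "m0 \<le> r0" "\<And>v. ereal (m0 - (r0 - m0) * norm (v - x0)) \<le> g v"
    using g_lower_linear[OF hg] by blast
  define k where "k = r0 - m0"
  define \<delta> where "\<delta> = norm (x0 - z)"
  define R where "R = r0 + q x0"
  define C where "C = m0 - k * \<delta>"
  have k0: "k \<ge> 0" using x0(2) k_def by simp
  have hb: "ereal (C - k * norm (v - z) + q v) \<le> h v" for v
  proof -
    have "norm (v - x0) \<le> norm (v - z) + \<delta>" unfolding \<delta>_def
      using norm_triangle_ineq[of "v - z" "z - x0"] by (simp add: norm_minus_commute)
    from mult_left_mono[OF this k0]
    have "C - k * norm (v - z) \<le> m0 - k * norm (v - x0)"
      unfolding C_def by (simp add: algebra_simps)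
    then have "ereal (C - k * norm (v - z)) \<le> g v" using x0(3)[of v] k_def
      by (meson ereal_less_eq(3) order.trans)
    then have "ereal (C - k * norm (v - z)) + ereal (q v) \<le> h v" unfolding h_def by (rule add_right_mono)
    then show ?thesis by simp
  qed
  define \<rho> where "\<rho> = 2 * \<gamma> * k + 2 * \<gamma> * \<bar>R - C\<bar> + 1"
  have bnd: "norm (v - z) \<le> \<rho>" if "h v \<le> ereal R" for v
  proof -
    define s where "s = norm (v - z)"
    have "C - k * s + s^2 / (2 * \<gamma>) \<le> R" using hb[of v] that unfolding s_def q_def
      by (meson ereal_less_eq(3) order.trans)
    then have "s^2 \<le> (2 * \<gamma> * k) * s + 2 * \<gamma> * (R - C)" using gp by (simp add: field_simps)
    also have "\<dots> \<le> (2 * \<gamma> * k) * s + 2 * \<gamma> * \<bar>R - C\<bar>" using gp by simp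
    finally have "s \<le> 2 * \<gamma> * k + 2 * \<gamma> * \<bar>R - C\<bar> + 1"
      using quad_bound[of s "2 * \<gamma> * k" "2 * \<gamma> * \<bar>R - C\<bar>"] gp k0 s_def by auto
    then show ?thesis unfolding s_def \<rho>_def .
  qed
  have hx0: "h x0 = ereal R" unfolding h_def R_def using x0(1) by simp
  have qc: "continuous_on UNIV q" unfolding q_def using gp by (intro continuous_intros) auto
  have cl: "closed {x. h x \<le> ereal c}" for c
    unfolding h_def by (rule lsc_plus_cont_closed[OF _ qc]) (use hg in \<open>simp add: H1_g_def\<close>)
  have x0K: "x0 \<in> cball z \<rho>" using bnd[of x0] hx0 by (simp add: dist_norm norm_minus_commute)
  obtain u where u: "u \<in> cball z \<rho>" "\<And>y. y \<in> cball z \<rho> \<Longrightarrow> h u \<le> h y"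
    using lsc_min_compact[of "cball z \<rho>" h, OF compact_cball _ cl] x0K by blast
  have "h u \<le> h w" for w
  proof (cases "w \<in> cball z \<rho>")
    case True then show ?thesis by (rule u(2))
  next
    case False
    then have "\<not> h w \<le> ereal R" using bnd[of w] by (auto simp: dist_norm norm_minus_commute)
    then have "h x0 \<le> h w" using hx0 by simp
    then show ?thesis using u(2)[OF x0K] by simp
  qed
  then show ?thesis unfolding h_def q_def by blast
qed

definition is_pmin :: "('a::euclidean_space \<Rightarrow> ereal) \<Rightarrow> real \<Rightarrow> 'a \<Rightarrow> 'a \<Rightarrow> bool" where
  "is_pmin g \<gamma> z v \<longleftrightarrow> (\<forall>w. g v + ereal ((norm (v - z))\<^sup>2 / (2 * \<gamma>)) \<le> g w + ereal ((norm (w - z))\<^sup>2 / (2 * \<gamma>)))"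

lemma pmin_fin:
  assumes hg: "H1_g g" and m: "is_pmin g \<gamma> z v"
  shows "\<exists>a. g v = ereal a"
proof -
  obtain x0 where x0: "g x0 \<noteq> \<infinity>" using hg unfolding H1_g_def by blast
  have nm: "\<And>x. g x \<noteq> -\<infinity>" using hg unfolding H1_g_def by blast
  have "g v + ereal ((norm (v - z))\<^sup>2 / (2 * \<gamma>)) \<le> g x0 + ereal ((norm (x0 - z))\<^sup>2 / (2 * \<gamma>))"
    using m unfolding is_pmin_def by blast
  then have "g v \<noteq> \<infinity>" using x0 nm[of x0] by auto
  then show ?thesis using nm[of v] by (cases "g v") auto
qed

lemma half_sq:
  fixes A B :: "'a::real_inner"
  shows "(norm ((1/2) *\<^sub>R (A + B)))\<^sup>2 = ((norm A)\<^sup>2 + (norm B)\<^sup>2) / 2 - (norm (A - B))\<^sup>2 / 4"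
  unfolding power2_norm_eq_inner
  by (simp add: inner_add_left inner_add_right inner_diff_left inner_diff_right inner_commute field_simps)

lemma pmin_unique:
  fixes g :: "'a::euclidean_space \<Rightarrow> ereal"
  assumes hg: "H1_g g" and gp: "\<gamma> > 0" and m1: "is_pmin g \<gamma> z v1" and m2: "is_pmin g \<gamma> z v2"
  shows "v1 = v2"
proof -
  obtain a1 where a1: "g v1 = ereal a1" using pmin_fin[OF hg m1] by blast
  obtain a2 where a2: "g v2 = ereal a2" using pmin_fin[OF hg m2] by blast
  define q where "q v = (norm (v - z))\<^sup>2 / (2 * \<gamma>)" for v
  define mid where "mid = (1 - 1/2) *\<^sub>R v1 + (1/2) *\<^sub>R v2"
  have cv: "ereal_convex g" using hg unfolding H1_g_def by blast
  have gm: "g mid \<le> ereal (1 - 1/2) * g v1 + ereal (1/2) * g v2"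
    unfolding mid_def using cv[unfolded ereal_convex_def, rule_format, of "1/2" v1 v2] by simp
  have "ereal (a1 + q v1) \<le> g mid + ereal (q mid)" using m1 a1 unfolding is_pmin_def q_def by simp
  also have "\<dots> \<le> ereal (a1 / 2 + a2 / 2) + ereal (q mid)"
  proof (rule add_right_mono)
    show "g mid \<le> ereal (a1 / 2 + a2 / 2)" using gm a1 a2 by simp
  qed
  also have "\<dots> = ereal (a1 / 2 + a2 / 2 + q mid)" by simp
  finally have i1: "a1 + q v1 \<le> a1 / 2 + a2 / 2 + q mid" by simp
  have i2: "a2 + q v2 \<le> a1 + q v1"
  proof -
    have "g v2 + ereal (q v2) \<le> g v1 + ereal (q v1)" using m2 unfolding is_pmin_def q_def by blast
    then show ?thesis using a1 a2 by simp
  qed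
  have "mid - z = (1/2) *\<^sub>R ((v1 - z) + (v2 - z))" unfolding mid_def by (simp add: algebra_simps flip: scaleR_add_left)
  then have hs: "(norm (mid - z))\<^sup>2 = ((norm (v1 - z))\<^sup>2 + (norm (v2 - z))\<^sup>2) / 2 - (norm (v1 - v2))\<^sup>2 / 4"
    using half_sq[of "v1 - z" "v2 - z"] by simp
  have qm: "q mid = (q v1 + q v2) / 2 - (norm (v1 - v2))\<^sup>2 / (8 * \<gamma>)"
    unfolding q_def hs using gp by (simp add: field_simps)
  have "(norm (v1 - v2))\<^sup>2 / (8 * \<gamma>) \<le> 0" using i1 i2 unfolding qm by argo
  then have "(norm (v1 - v2))\<^sup>2 \<le> 0" using gp by (simp add: divide_le_0_iff)
  then show ?thesis by simp
qed

lemma prox_pmin: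
  fixes g :: "'a::euclidean_space \<Rightarrow> ereal"
  assumes hg: "H1_g g" and gp: "\<gamma> > 0"
  shows "is_pmin g \<gamma> z (Prox g \<gamma> z)"
proof -
  have ex1: "\<exists>!v. is_pmin g \<gamma> z v"
    using prox_exists[OF hg gp, of z] pmin_unique[OF hg gp] unfolding is_pmin_def by blast
  have "Prox g \<gamma> z = (THE v. is_pmin g \<gamma> z v)" unfolding Prox_def is_pmin_def by simp
  then show ?thesis using theI'[OF ex1] by simp
qed

lemma prox_vi:
  fixes g :: "'a::euclidean_space \<Rightarrow> ereal"
  assumes hg: "H1_g g" and gp: "\<gamma> > 0" and pa: "g (Prox g \<gamma> z) = ereal a" and yb: "g y = ereal b"
  shows "a \<le> b + ((Prox g \<gamma> z - z) \<bullet> (y - Prox g \<gamma> z)) / \<gamma>"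
proof -
  define p where "p = Prox g \<gamma> z"
  define w where "w = p - z"
  define e where "e = y - p"
  have pm: "is_pmin g \<gamma> z p" unfolding p_def by (rule prox_pmin[OF hg gp])
  have cv: "ereal_convex g" using hg unfolding H1_g_def by blast
  have key: "a \<le> b + (w \<bullet> e) / \<gamma> + t * (norm e)\<^sup>2 / (2 * \<gamma>)" if t: "0 < t" "t \<le> 1" for t
  proof -
    define yt where "yt = (1 - t) *\<^sub>R p + t *\<^sub>R y"
    have "g p + ereal ((norm (p - z))\<^sup>2 / (2 * \<gamma>)) \<le> g yt + ereal ((norm (yt - z))\<^sup>2 / (2 * \<gamma>))"
      using pm unfolding is_pmin_def by blast
    also have "\<dots> \<le> ereal ((1 - t) * a + t * b) + ereal ((norm (yt - z))\<^sup>2 / (2 * \<gamma>))"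
    proof (rule add_right_mono)
      have "g yt \<le> ereal (1 - t) * g p + ereal t * g y"
        unfolding yt_def using cv[unfolded ereal_convex_def, rule_format, of t p y] t by simp
      then show "g yt \<le> ereal ((1 - t) * a + t * b)" using pa yb p_def by simp
    qed
    finally have i: "a + (norm w)\<^sup>2 / (2 * \<gamma>) \<le> (1 - t) * a + t * b + (norm (w + t *\<^sub>R e))\<^sup>2 / (2 * \<gamma>)"
      using pa unfolding p_def[symmetric] w_def e_def yt_def by (simp add: algebra_simps)
    have n: "(norm (w + t *\<^sub>R e))\<^sup>2 = (norm w)\<^sup>2 + 2 * t * (w \<bullet> e) + t^2 * (norm e)\<^sup>2"
      unfolding power2_norm_eq_inner by (simp add: inner_add_left inner_add_right inner_commute power2_eq_square algebra_simps)
    have n2: "(norm (w + t *\<^sub>R e))\<^sup>2 / (2 * \<gamma>) = (norm w)\<^sup>2 / (2 * \<gamma>) + t * ((w \<bullet> e) / \<gamma> + t * (norm e)\<^sup>2 / (2 * \<gamma>))"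
      unfolding n using gp by (simp add: field_simps power2_eq_square)
    have "t * a \<le> t * b + t * ((w \<bullet> e) / \<gamma> + t * (norm e)\<^sup>2 / (2 * \<gamma>))"
      using i unfolding n2 by (simp add: algebra_simps)
    then have "t * a \<le> t * (b + (w \<bullet> e) / \<gamma> + t * (norm e)\<^sup>2 / (2 * \<gamma>))" by (simp add: algebra_simps)
    then show ?thesis using t by simp
  qed
  have "a \<le> (b + (w \<bullet> e) / \<gamma>) + \<epsilon>" if eps: "\<epsilon> > 0" for \<epsilon>
  proof -
    define t where "t = min 1 (\<epsilon> * (2 * \<gamma>) / ((norm e)\<^sup>2 + 1))"
    have t0: "0 < t" "t \<le> 1" unfolding t_def using eps gp by (auto intro!: divide_pos_pos add_nonneg_pos)
    have "t * (norm e)\<^sup>2 \<le> t * ((norm e)\<^sup>2 + 1)" using t0 by simp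
    also have "\<dots> \<le> (\<epsilon> * (2 * \<gamma>) / ((norm e)\<^sup>2 + 1)) * ((norm e)\<^sup>2 + 1)"
      by (rule mult_right_mono) (auto simp: t_def)
    also have "\<dots> = \<epsilon> * (2 * \<gamma>)"
    proof -
      have "(norm e)\<^sup>2 + 1 \<noteq> 0" by (metis add_nonneg_pos zero_le_power2 zero_less_one less_irrefl)
      then show ?thesis by simp
    qed
    finally have "t * (norm e)\<^sup>2 / (2 * \<gamma>) \<le> \<epsilon>" using gp by (simp add: divide_le_eq)
    then show ?thesis using key[OF t0] by linarith
  qed
  then have "a \<le> b + (w \<bullet> e) / \<gamma>" by (rule field_le_epsilon)
  then show ?thesis unfolding w_def e_def p_def .
qed



lemma core_nonconvex:
  fixes fS fT a b G X1 Xr Xe D N R L \<gamma> :: real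
  assumes VT: "a - b \<le> - Xr / \<gamma> + G"
    and VS: "b - a \<le> (- (D^2 / \<gamma>)) + Xr / \<gamma> - G - Xe"
    and up: "fS - fT \<le> G + X1 + L / 2 * D^2"
    and lo: "fS - fT \<ge> G + X1 - L / 2 * D^2"
    and bX1: "\<bar>X1\<bar> \<le> L * R * D" and bXr: "\<bar>Xr\<bar> \<le> R * D" and bXe: "\<bar>Xe\<bar> \<le> N * D"
    and DN: "D \<le> \<gamma> * N" and pos: "0 \<le> D" "0 \<le> N" "0 \<le> R" "0 < \<gamma>" "0 < L" and gL: "\<gamma> * L \<le> 1"
  shows "\<bar>fS + b - (fT + a)\<bar> \<le> (1 + \<gamma> * L) * N * (\<gamma> * N + (1 + \<gamma> * L) * R)"
proof -
  have LD: "L * D^2 \<le> D^2 / \<gamma>"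
  proof -
    have "L \<le> 1 / \<gamma>" using gL pos by (simp add: field_simps)
    then have "L * D^2 \<le> (1 / \<gamma>) * D^2" by (rule mult_right_mono) simp
    then show ?thesis by simp
  qed
  have RD: "R * D \<le> \<gamma> * (R * N)" using mult_left_mono[OF DN, of R] pos by (simp add: algebra_simps)
  have Xrg: "\<bar>Xr\<bar> / \<gamma> \<le> R * N" using bXr RD pos by (simp add: divide_le_eq algebra_simps)
  have X1b: "\<bar>X1\<bar> \<le> \<gamma> * L * (R * N)"
  proof -
    have t: "L * (R * D) \<le> L * (\<gamma> * (R * N))" by (rule mult_left_mono[OF RD]) (use pos in simp)
    have "\<bar>X1\<bar> \<le> L * (R * D)" using bX1 by (simp add: mult.assoc)
    also have "\<dots> \<le> \<gamma> * L * (R * N)" using t by (simp add: mult_ac)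
    finally show ?thesis .
  qed
  have Xeb: "\<bar>Xe\<bar> \<le> \<gamma> * N^2" using bXe mult_left_mono[OF DN, of N] pos by (simp add: power2_eq_square algebra_simps)
  have D2: "D^2 \<le> \<gamma>^2 * N^2" using DN pos by (simp add: power_mono power_mult_distrib[symmetric])
  have LD2: "L / 2 * D^2 \<le> \<gamma> * N^2 / 2"
  proof -
    have "L * D^2 \<le> L * (\<gamma>^2 * N^2)" using D2 pos by (simp add: mult_left_mono)
    also have "\<dots> = (\<gamma> * L) * (\<gamma> * N^2)" by (simp add: power2_eq_square)
    also have "\<dots> \<le> 1 * (\<gamma> * N^2)" using gL pos by (intro mult_right_mono) auto
    finally show ?thesis by simp
  qed
  have ax: "\<bar>Xr / \<gamma>\<bar> \<le> R * N" using Xrg pos by (simp add: abs_divide)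
  have Xr1: "Xr / \<gamma> \<le> R * N" "- (Xr / \<gamma>) \<le> R * N"
    using abs_le_D1[OF ax] abs_le_D2[OF ax] by simp_all
  have upper: "fS + b - (fT + a) \<le> \<gamma> * N^2 + (1 + \<gamma> * L) * (R * N)"
  proof -
    have "fS + b - (fT + a) \<le> X1 + (L / 2 * D^2 - D^2 / \<gamma>) + Xr / \<gamma> - Xe" using up VS by linarith
    moreover have "L / 2 * D^2 - D^2 / \<gamma> \<le> 0"
    proof -
      have "0 \<le> D^2 / \<gamma>" using pos by simp
      moreover have "L / 2 * D^2 = (L * D^2) / 2" by simp
      ultimately show ?thesis using LD by linarith
    qed
    ultimately show ?thesis using X1b Xeb Xr1 by (simp add: abs_le_iff algebra_simps)
  qed
  have lower: "fT + a - (fS + b) \<le> \<gamma> * N^2 + (1 + \<gamma> * L) * (R * N)"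
  proof -
    have "fT + a - (fS + b) \<le> - X1 + L / 2 * D^2 - Xr / \<gamma>" using lo VT by linarith
    moreover have "- X1 \<le> \<gamma> * L * (R * N)" using abs_le_D2[OF X1b] .
    moreover have "(1 + \<gamma> * L) * (R * N) = R * N + \<gamma> * L * (R * N)" by (simp add: algebra_simps)
    moreover have "\<gamma> * N^2 / 2 \<le> \<gamma> * N^2" using pos by simp
    ultimately show ?thesis using LD2 Xr1 by linarith
  qed
  have "\<gamma> * N^2 + (1 + \<gamma> * L) * (R * N) \<le> (1 + \<gamma> * L) * N * (\<gamma> * N + (1 + \<gamma> * L) * R)"
  proof -
    have g1: "1 \<le> 1 + \<gamma> * L" using pos by simp
    have a1: "\<gamma> * N^2 \<le> (1 + \<gamma> * L) * (\<gamma> * N^2)"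
      using mult_right_mono[OF g1, of "\<gamma> * N^2"] pos by simp
    have a2: "(1 + \<gamma> * L) * (R * N) \<le> (1 + \<gamma> * L) * ((1 + \<gamma> * L) * (R * N))"
      using mult_right_mono[OF g1, of "(1 + \<gamma> * L) * (R * N)"] pos by simp
    show ?thesis using a1 a2 by (simp add: power2_eq_square algebra_simps)
  qed
  then show ?thesis using upper lower by (simp add: abs_le_iff)
qed

lemma core_convex:
  fixes fS fT a b G X1 Xr Xe Xs D N R L \<gamma> :: real
  assumes VT: "a - b \<le> - Xr / \<gamma> + G"
    and VS: "b - a \<le> (- (D^2 / \<gamma>)) + Xr / \<gamma> - G - Xe"
    and up: "fS - fT \<le> G + X1 + Xs"
    and lo: "fS - fT \<ge> G + X1"
    and bXs: "Xs \<le> L * D^2" and bW: "\<bar>Xr + \<gamma> * X1\<bar> \<le> R * D" and bXe: "\<bar>Xe\<bar> \<le> N * D"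
    and DN: "D \<le> \<gamma> * N" and pos: "0 \<le> D" "0 \<le> N" "0 \<le> R" "0 < \<gamma>" "0 < L" and gL: "\<gamma> * L \<le> 1"
  shows "\<bar>fS + b - (fT + a)\<bar> \<le> (1 + 0 * \<gamma> * L) * N * (\<gamma> * N + (1 + 0 * \<gamma> * L) * R)"
proof -
  have LD: "L * D^2 \<le> D^2 / \<gamma>"
  proof -
    have "L \<le> 1 / \<gamma>" using gL pos by (simp add: field_simps)
    then have "L * D^2 \<le> (1 / \<gamma>) * D^2" by (rule mult_right_mono) simp
    then show ?thesis by simp
  qed
  have RD: "R * D \<le> \<gamma> * (R * N)" using mult_left_mono[OF DN, of R] pos by (simp add: algebra_simps)
  have Wg: "\<bar>Xr + \<gamma> * X1\<bar> / \<gamma> \<le> R * N" using bW RD pos by (simp add: divide_le_eq algebra_simps)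
  have eq: "(Xr + \<gamma> * X1) / \<gamma> = Xr / \<gamma> + X1" using pos by (simp add: field_simps)
  have "\<bar>(Xr + \<gamma> * X1) / \<gamma>\<bar> \<le> R * N" using Wg pos by (simp add: abs_divide)
  then have W1: "Xr / \<gamma> + X1 \<le> R * N" "- (Xr / \<gamma> + X1) \<le> R * N" unfolding eq by (auto simp: abs_le_iff)
  have Xeb: "\<bar>Xe\<bar> \<le> \<gamma> * N^2" using bXe mult_left_mono[OF DN, of N] pos by (simp add: power2_eq_square algebra_simps)
  have upper: "fS + b - (fT + a) \<le> \<gamma> * N^2 + R * N"
    using up VS bXs LD W1 Xeb by (simp add: abs_le_iff)
  have lower: "fT + a - (fS + b) \<le> \<gamma> * N^2 + R * N"
    using lo VT W1 Xeb pos by (simp add: abs_le_iff)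
  show ?thesis using upper lower by (simp add: abs_le_iff power2_eq_square algebra_simps)
qed

lemma prox_fin:
  assumes hg: "H1_g g" and gp: "\<gamma> > 0"
  shows "\<exists>a. g (Prox g \<gamma> z) = ereal a"
  by (rule pmin_fin[OF hg prox_pmin[OF hg gp]])

lemma prox_nonexp:
  fixes g :: "'a::euclidean_space \<Rightarrow> ereal"
  assumes hg: "H1_g g" and gp: "\<gamma> > 0"
  shows "norm (Prox g \<gamma> z1 - Prox g \<gamma> z2) \<le> norm (z1 - z2)"
proof -
  define p1 where "p1 = Prox g \<gamma> z1"
  define p2 where "p2 = Prox g \<gamma> z2"
  obtain a1 where a1: "g p1 = ereal a1" using prox_fin[OF hg gp] p1_def by blast
  obtain a2 where a2: "g p2 = ereal a2" using prox_fin[OF hg gp] p2_def by blast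
  have v1: "a1 \<le> a2 + ((p1 - z1) \<bullet> (p2 - p1)) / \<gamma>" using prox_vi[OF hg gp, of z1 a1 p2 a2] a1 a2 p1_def by simp
  have v2: "a2 \<le> a1 + ((p2 - z2) \<bullet> (p1 - p2)) / \<gamma>" using prox_vi[OF hg gp, of z2 a2 p1 a1] a1 a2 p2_def by simp
  have "0 \<le> ((p1 - z1) \<bullet> (p2 - p1)) / \<gamma> + ((p2 - z2) \<bullet> (p1 - p2)) / \<gamma>" using v1 v2 by linarith
  then have "0 \<le> ((p1 - z1) \<bullet> (p2 - p1) + (p2 - z2) \<bullet> (p1 - p2)) / \<gamma>" by (simp add: add_divide_distrib)
  then have s0: "0 \<le> (p1 - z1) \<bullet> (p2 - p1) + (p2 - z2) \<bullet> (p1 - p2)" using gp by (simp add: zero_le_divide_iff)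
  have e: "(p1 - z1) \<bullet> (p2 - p1) + (p2 - z2) \<bullet> (p1 - p2) = (z1 - z2) \<bullet> (p1 - p2) - (norm (p1 - p2))\<^sup>2"
    unfolding power2_norm_eq_inner by (simp add: inner_diff_left inner_diff_right inner_commute algebra_simps)
  have "(norm (p1 - p2))\<^sup>2 \<le> (z1 - z2) \<bullet> (p1 - p2)" using s0 unfolding e by simp
  also have "\<dots> \<le> norm (z1 - z2) * norm (p1 - p2)" by (rule norm_cauchy_schwarz)
  finally have "norm (p1 - p2) * norm (p1 - p2) \<le> norm (z1 - z2) * norm (p1 - p2)" by (simp add: power2_eq_square)
  then have "norm (p1 - p2) \<le> norm (z1 - z2)"
    by (cases "norm (p1 - p2) = 0") (auto simp: mult_le_cancel_right)
  then show ?thesis unfolding p1_def p2_def .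
qed



theorem lemma14:
  fixes f :: "'a::euclidean_space \<Rightarrow> real"
    and grad_f :: "'a \<Rightarrow> 'a"
    and g :: "'a \<Rightarrow> ereal"
    and L :: real
  assumes hg: "H1_g g"
    and hgrad: "\<And>x. (f has_derivative (\<lambda>h. grad_f x \<bullet> h)) (at x)"
    and hL: "L > 0"
    and hLip: "\<And>x y. norm (grad_f x - grad_f y) \<le> L * norm (x - y)"
  shows "(\<forall>\<theta> H \<gamma>. \<gamma> > 0 \<longrightarrow>
            norm (T_op g grad_f \<gamma> \<theta> - Prox g \<gamma> (\<theta> - \<gamma> *\<^sub>R H))
              \<le> \<gamma> * norm (H - grad_f \<theta>))
       \<and> (\<forall>\<theta> H \<gamma>. 0 < \<gamma> \<and> \<gamma> \<le> 1 / L \<longrightarrow>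
            (let c = (if convex_on UNIV f then 0 else 1 :: real);
                 F = (\<lambda>x. ereal (f x) + g x);
                 S = Prox g \<gamma> (\<theta> - \<gamma> *\<^sub>R H);
                 T = T_op g grad_f \<gamma> \<theta>;
                 \<eta> = H - grad_f \<theta>
             in \<bar>F S - F T\<bar> \<le> ereal ((1 + c * \<gamma> * L) * norm \<eta> *
                   (\<gamma> * norm \<eta> + (1 + c * \<gamma> * L) * norm (\<theta> - T)))))"
proof (intro conjI allI impI)
  fix \<theta> H :: 'a and \<gamma> :: real
  assume gp: "\<gamma> > 0"
  have "norm (T_op g grad_f \<gamma> \<theta> - Prox g \<gamma> (\<theta> - \<gamma> *\<^sub>R H))
      \<le> norm ((\<theta> - \<gamma> *\<^sub>R grad_f \<theta>) - (\<theta> - \<gamma> *\<^sub>R H))"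
    unfolding T_op_def by (rule prox_nonexp[OF hg gp])
  also have "(\<theta> - \<gamma> *\<^sub>R grad_f \<theta>) - (\<theta> - \<gamma> *\<^sub>R H) = \<gamma> *\<^sub>R (H - grad_f \<theta>)"
    by (simp add: algebra_simps)
  finally show "norm (T_op g grad_f \<gamma> \<theta> - Prox g \<gamma> (\<theta> - \<gamma> *\<^sub>R H)) \<le> \<gamma> * norm (H - grad_f \<theta>)"
    using gp by simp
next
  fix \<theta> H :: 'a and \<gamma> :: real
  assume "0 < \<gamma> \<and> \<gamma> \<le> 1 / L"
  then have gp: "0 < \<gamma>" and g1: "\<gamma> \<le> 1 / L" by auto
  have gL: "\<gamma> * L \<le> 1" using g1 hL by (simp add: field_simps)
  define zT where "zT = \<theta> - \<gamma> *\<^sub>R grad_f \<theta>"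
  define zS where "zS = \<theta> - \<gamma> *\<^sub>R H"
  define T where "T = Prox g \<gamma> zT"
  define S where "S = Prox g \<gamma> zS"
  define \<eta> where "\<eta> = H - grad_f \<theta>"
  define d where "d = S - T"
  define r where "r = \<theta> - T"
  define G where "G = grad_f \<theta> \<bullet> d"
  define X1 where "X1 = (grad_f T - grad_f \<theta>) \<bullet> d"
  define Xr where "Xr = r \<bullet> d"
  define Xe where "Xe = \<eta> \<bullet> d"
  define Xs where "Xs = (grad_f S - grad_f T) \<bullet> d"
  define D where "D = norm d"
  define N where "N = norm \<eta>"
  define R where "R = norm r"
  obtain a where a: "g T = ereal a" using prox_fin[OF hg gp] T_def by blast
  obtain b where b: "g S = ereal b" using prox_fin[OF hg gp] S_def by blast
  have DN: "D \<le> \<gamma> * N"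
  proof -
    have "D = norm (Prox g \<gamma> zT - Prox g \<gamma> zS)" unfolding D_def d_def T_def S_def by (simp add: norm_minus_commute)
    also have "\<dots> \<le> norm (zT - zS)" by (rule prox_nonexp[OF hg gp])
    also have "zT - zS = \<gamma> *\<^sub>R \<eta>" unfolding zT_def zS_def \<eta>_def by (simp add: algebra_simps)
    finally show ?thesis using gp unfolding N_def by simp
  qed
  have VT: "a - b \<le> - Xr / \<gamma> + G"
  proof -
    have "a \<le> b + ((T - zT) \<bullet> (S - T)) / \<gamma>" using prox_vi[OF hg gp, of zT a S b] a b T_def by simp
    moreover have "T - zT = \<gamma> *\<^sub>R grad_f \<theta> - r" unfolding zT_def r_def by (simp add: algebra_simps)
    moreover have "(\<gamma> * G - Xr) / \<gamma> = - Xr / \<gamma> + G" using gp by (simp add: field_simps)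
    ultimately show ?thesis unfolding G_def Xr_def d_def by (simp add: inner_diff_left)
  qed
  have VS: "b - a \<le> (- (D^2 / \<gamma>)) + Xr / \<gamma> - G - Xe"
  proof -
    have 1: "b \<le> a + ((S - zS) \<bullet> (T - S)) / \<gamma>" using prox_vi[OF hg gp, of zS b T a] a b S_def by simp
    have e1: "S - zS = d - r + \<gamma> *\<^sub>R \<eta> + \<gamma> *\<^sub>R grad_f \<theta>" unfolding zS_def r_def d_def \<eta>_def by (simp add: algebra_simps)
    have e2: "T - S = - d" unfolding d_def by simp
    have 2: "(S - zS) \<bullet> (T - S) = - (D^2) + Xr - \<gamma> * Xe - \<gamma> * G"
      unfolding e1 e2 D_def Xr_def Xe_def G_def power2_norm_eq_inner by (simp add: inner_add_left inner_diff_left inner_add_right inner_diff_right inner_commute algebra_simps)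
    have 3: "(- (D^2) + Xr - \<gamma> * Xe - \<gamma> * G) / \<gamma> = (- (D^2 / \<gamma>)) + Xr / \<gamma> - G - Xe" using gp by (simp add: field_simps)
    show ?thesis using 1 unfolding 2 3 by linarith
  qed
  have gT: "grad_f T \<bullet> d = G + X1" unfolding G_def X1_def by (simp add: inner_diff_left)
  have gS: "grad_f S \<bullet> d = G + X1 + Xs" unfolding G_def X1_def Xs_def by (simp add: inner_diff_left)
  have ST: "S = T + d" unfolding d_def by simp
  have bX1: "\<bar>X1\<bar> \<le> L * R * D"
  proof -
    have "\<bar>X1\<bar> \<le> norm (grad_f T - grad_f \<theta>) * D" unfolding X1_def D_def by (rule Cauchy_Schwarz_ineq2)
    also have "\<dots> \<le> (L * R) * D" unfolding D_def
      by (rule mult_right_mono) (use hLip[of T \<theta>] in \<open>auto simp: R_def r_def norm_minus_commute\<close>)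
    finally show ?thesis .
  qed
  have bXr: "\<bar>Xr\<bar> \<le> R * D" unfolding Xr_def R_def D_def by (rule Cauchy_Schwarz_ineq2)
  have bXe: "\<bar>Xe\<bar> \<le> N * D" unfolding Xe_def N_def D_def by (rule Cauchy_Schwarz_ineq2)
  have pos: "0 \<le> D" "0 \<le> N" "0 \<le> R" "0 < \<gamma>" "0 < L" using gp hL by (auto simp: D_def N_def R_def)
  have Fdiff: "\<bar>(\<lambda>x. ereal (f x) + g x) S - (\<lambda>x. ereal (f x) + g x) T\<bar> = ereal \<bar>f S + b - (f T + a)\<bar>"
    using a b by simp
  show "let c = if convex_on UNIV f then 0 else 1; F = \<lambda>x. ereal (f x) + g x;
            S = Prox g \<gamma> (\<theta> - \<gamma> *\<^sub>R H); T = T_op g grad_f \<gamma> \<theta>; \<eta> = H - grad_f \<theta>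
        in \<bar>F S - F T\<bar> \<le> ereal ((1 + c * \<gamma> * L) * norm \<eta> * (\<gamma> * norm \<eta> + (1 + c * \<gamma> * L) * norm (\<theta> - T)))"
  proof (cases "convex_on UNIV f")
    case True
    have up: "f S - f T \<le> G + X1 + Xs"
      using convex_grad[OF hgrad True, of S T] gS unfolding d_def by (simp add: inner_minus_right inner_diff_right)
    have lo: "f S - f T \<ge> G + X1"
      using convex_grad[OF hgrad True, of T S] gT unfolding d_def by simp
    have bXs: "Xs \<le> L * D^2"
    proof -
      have "Xs \<le> norm (grad_f S - grad_f T) * D" unfolding Xs_def D_def by (rule norm_cauchy_schwarz)
      also have "\<dots> \<le> (L * D) * D" unfolding D_def
        by (rule mult_right_mono) (use hLip[of S T] in \<open>auto simp: d_def\<close>)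
      finally show ?thesis by (simp add: power2_eq_square mult.assoc)
    qed
    have bW: "\<bar>Xr + \<gamma> * X1\<bar> \<le> R * D"
    proof -
      have "Xr + \<gamma> * X1 = ((\<theta> - T) - \<gamma> *\<^sub>R (grad_f \<theta> - grad_f T)) \<bullet> d"
        unfolding Xr_def X1_def r_def by (simp add: inner_diff_left inner_diff_right algebra_simps)
      then have "\<bar>Xr + \<gamma> * X1\<bar> \<le> norm ((\<theta> - T) - \<gamma> *\<^sub>R (grad_f \<theta> - grad_f T)) * D"
        unfolding D_def by (simp add: Cauchy_Schwarz_ineq2)
      also have "\<dots> \<le> R * D" unfolding D_def R_def r_def
        by (rule mult_right_mono) (use grad_step_nonexp[OF hgrad hLip True hL gp g1, of \<theta> T] in auto)
      finally show ?thesis .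
    qed
    have "\<bar>f S + b - (f T + a)\<bar> \<le> (1 + 0 * \<gamma> * L) * N * (\<gamma> * N + (1 + 0 * \<gamma> * L) * R)"
      by (rule core_convex[OF VT VS up lo bXs bW bXe DN pos gL])
    then show ?thesis using True Fdiff unfolding Let_def T_op_def N_def R_def r_def \<eta>_def
      by (simp add: S_def T_def zS_def zT_def)
  next
    case False
    have up: "f S - f T \<le> G + X1 + L / 2 * D^2"
      using descent_upper[OF hgrad hLip, of S T] gT unfolding D_def d_def by simp
    have lo: "f S - f T \<ge> G + X1 - L / 2 * D^2"
      using descent_lower[OF hgrad hLip, of T S] gT unfolding D_def d_def by simp
    have "\<bar>f S + b - (f T + a)\<bar> \<le> (1 + \<gamma> * L) * N * (\<gamma> * N + (1 + \<gamma> * L) * R)"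
      by (rule core_nonconvex[OF VT VS up lo bX1 bXr bXe DN pos gL])
    then show ?thesis using False Fdiff unfolding Let_def T_op_def N_def R_def r_def \<eta>_def
      by (simp add: S_def T_def zS_def zT_def)
  qed
qed

end
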